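(* Let $H,K$ be groups, $G=H\times K$, and $\phi\in\operatorname{End}(G)$ with $\phi(h,k)=(\alpha(h)\beta(k),\delta(k))$, where $\alpha\in\operatorname{End}(H)$, $\beta\in\operatorname{Hom}(K,H)$ with $[\operatorname{im}\alpha,\operatorname{im}\beta]=1$, and $\delta\in\operatorname{End}(K)$. Let $\{k_j\}_{j\in\mathcal J}$ be a set of representatives of the $\delta$-conjugacy classes of $K$. For each $j$, the twisted stabiliser $\operatorname{Stab}_\delta(k_j)$ acts on the right on the set $\mathcal R[\alpha]$ of $\alpha$-conjugacy classes of $H$ by $([h]_\alpha,y)\mapsto[h\beta(y)]_\alpha$; let $r_j$ be the number of orbits of this action. Then $R(\phi)=\sum_{j\in\mathcal J}r_j$, where an infinite sum, or a sum having some term equal to $\infty$, is interpreted as $\infty$.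
   Context: For an endomorphism $\psi$ of a group $A$, $x,y\in A$ are $\psi$-conjugate if $x=gy\psi(g)^{-1}$ for some $g\in A$; $[x]_\psi$ is the class of $x$, $\mathcal R[\psi]$ the set of classes and $R(\psi)=|\mathcal R[\psi]|\in\mathbb{N}\cup\{\infty\}$. The $\psi$-stabiliser (twisted stabiliser) of $a\in A$ is the subgroup $\operatorname{Stab}_\psi(a)=\{b\in A\mid a=ba\psi(b)^{-1}\}$. *)

theory Defs
  imports "HOL-Algebra.Algebra" "HOL-Library.Extended_Nat"
begin

definition twisted_conj :: "('a, 'm) monoid_scheme \<Rightarrow> ('a \<Rightarrow> 'a) \<Rightarrow> 'a \<Rightarrow> 'a \<Rightarrow> bool" where
  "twisted_conj A psi x y \<longleftrightarrow>
     (\<exists>g \<in> carrier A. x = g \<otimes>\<^bsub>A\<^esub> y \<otimes>\<^bsub>A\<^esub> inv\<^bsub>A\<^esub> (psi g))"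

definition twisted_class :: "('a, 'm) monoid_scheme \<Rightarrow> ('a \<Rightarrow> 'a) \<Rightarrow> 'a \<Rightarrow> 'a set" where
  "twisted_class A psi x = {y \<in> carrier A. twisted_conj A psi x y}"

definition twisted_classes :: "('a, 'm) monoid_scheme \<Rightarrow> ('a \<Rightarrow> 'a) \<Rightarrow> 'a set set" where
  "twisted_classes A psi = twisted_class A psi ` carrier A"

definition ecard :: "'a set \<Rightarrow> enat" where
  "ecard S = (if finite S then enat (card S) else \<infinity>)"

definition reidemeister :: "('a, 'm) monoid_scheme \<Rightarrow> ('a \<Rightarrow> 'a) \<Rightarrow> enat" where
  "reidemeister A psi = ecard (twisted_classes A psi)"

definition twisted_stab :: "('a, 'm) monoid_scheme \<Rightarrow> ('a \<Rightarrow> 'a) \<Rightarrow> 'a \<Rightarrow> 'a set" where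
  "twisted_stab A psi a = {b \<in> carrier A. a = b \<otimes>\<^bsub>A\<^esub> a \<otimes>\<^bsub>A\<^esub> inv\<^bsub>A\<^esub> (psi b)}"

text \<open>Orbits of the right action of S \<subseteq> carrier K on R[alpha] given by
  ([h]_alpha, y) \<mapsto> [h beta(y)]_alpha; the orbit of [h]_alpha is
  {[h beta(y)]_alpha | y \<in> S}.\<close>
definition action_orbits ::
  "('a, 'm) monoid_scheme \<Rightarrow> ('a \<Rightarrow> 'a) \<Rightarrow> ('b \<Rightarrow> 'a) \<Rightarrow> 'b set \<Rightarrow> 'a set set set" where
  "action_orbits H alpha beta S =
     (\<lambda>h. (\<lambda>y. twisted_class H alpha (h \<otimes>\<^bsub>H\<^esub> beta y)) ` S) ` carrier H"

text \<open>Sum in N \<union> {\<infinity>}: an infinite sum is \<infinity> (a sum with an \<infinity> term is \<infinity> automatically).\<close>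
definition esum :: "'j set \<Rightarrow> ('j \<Rightarrow> enat) \<Rightarrow> enat" where
  "esum J f = (if finite J then sum f J else \<infinity>)"

end

theory Submission
  imports Defs
begin


lemma gh: "group A \<Longrightarrow> psi \<in> hom A A \<Longrightarrow> group_hom A A psi"
  by (simp add: group_hom_axioms_def group_hom_def)

lemma tc_refl:
  assumes "group A" "psi \<in> hom A A" "x \<in> carrier A"
  shows "twisted_conj A psi x x"
proof -
  interpret group_hom A A psi using gh assms by blast
  show ?thesis unfolding twisted_conj_def using assms by (intro bexI[of _ "\<one>\<^bsub>A\<^esub>"]) auto
qed

lemma tc_sym:
  assumes "group A" "psi \<in> hom A A" "x \<in> carrier A" "y \<in> carrier A"
    and "twisted_conj A psi x y"
  shows "twisted_conj A psi y x"
proof -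
  interpret group_hom A A psi using gh assms by blast
  obtain g where g: "g \<in> carrier A" "x = g \<otimes>\<^bsub>A\<^esub> y \<otimes>\<^bsub>A\<^esub> inv\<^bsub>A\<^esub> (psi g)"
    using assms unfolding twisted_conj_def by blast
  have "y = inv\<^bsub>A\<^esub> g \<otimes>\<^bsub>A\<^esub> x \<otimes>\<^bsub>A\<^esub> inv\<^bsub>A\<^esub> (psi (inv\<^bsub>A\<^esub> g))"
    using g assms by (simp add: G.m_assoc G.inv_solve_left)
  then show ?thesis unfolding twisted_conj_def using g by blast
qed

lemma tc_trans:
  assumes "group A" "psi \<in> hom A A" "x \<in> carrier A" "y \<in> carrier A" "z \<in> carrier A"
    and "twisted_conj A psi x y" "twisted_conj A psi y z"
  shows "twisted_conj A psi x z"
proof -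
  interpret group_hom A A psi using gh assms by blast
  obtain g where g: "g \<in> carrier A" "x = g \<otimes>\<^bsub>A\<^esub> y \<otimes>\<^bsub>A\<^esub> inv\<^bsub>A\<^esub> (psi g)"
    using assms unfolding twisted_conj_def by blast
  obtain g' where g': "g' \<in> carrier A" "y = g' \<otimes>\<^bsub>A\<^esub> z \<otimes>\<^bsub>A\<^esub> inv\<^bsub>A\<^esub> (psi g')"
    using assms unfolding twisted_conj_def by blast
  have "x = (g \<otimes>\<^bsub>A\<^esub> g') \<otimes>\<^bsub>A\<^esub> z \<otimes>\<^bsub>A\<^esub> inv\<^bsub>A\<^esub> (psi (g \<otimes>\<^bsub>A\<^esub> g'))"
    using g g' assms by (simp add: G.m_assoc G.inv_mult_group)
  then show ?thesis unfolding twisted_conj_def using g g' by blast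
qed

lemma tc_class_eq:
  assumes "group A" "psi \<in> hom A A" "x \<in> carrier A" "y \<in> carrier A"
  shows "twisted_class A psi x = twisted_class A psi y \<longleftrightarrow> twisted_conj A psi x y"
proof
  assume "twisted_class A psi x = twisted_class A psi y"
  then have "y \<in> twisted_class A psi x" using tc_refl[OF assms(1,2,4)] assms(4)
    unfolding twisted_class_def by blast
  then show "twisted_conj A psi x y" unfolding twisted_class_def by blast
next
  assume h: "twisted_conj A psi x y"
  show "twisted_class A psi x = twisted_class A psi y"
    unfolding twisted_class_def using h tc_trans[OF assms(1,2)] tc_sym[OF assms(1,2)] assms
    by blast
qed




lemma ecard_kernel:
  assumes "\<forall>x\<in>A. \<forall>y\<in>A. f x = f y \<longleftrightarrow> g x = g y"
  shows "ecard (f ` A) = ecard (g ` A)"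
proof -
  define h where "h = (\<lambda>z. f (inv_into A g z))"
  have hg: "h (g x) = f x" if "x \<in> A" for x
  proof -
    have "inv_into A g (g x) \<in> A" "g (inv_into A g (g x)) = g x"
      using that by (auto intro: inv_into_into f_inv_into_f)
    then show ?thesis unfolding h_def using assms that by blast
  qed
  have "bij_betw h (g ` A) (f ` A)"
    unfolding bij_betw_def inj_on_def
  proof (intro conjI ballI impI)
    fix u v assume "u \<in> g ` A" "v \<in> g ` A" "h u = h v"
    then show "u = v" using hg assms by auto
  next
    show "h ` g ` A = f ` A" using hg by (auto simp: image_image)
  qed
  then show ?thesis unfolding ecard_def
    using bij_betw_finite bij_betw_same_card by metis
qed

lemma ecard_Sigma:
  assumes ne: "\<forall>j\<in>J. B j \<noteq> {}"
  shows "ecard (Sigma J B) = esum J (\<lambda>j. ecard (B j))"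
proof (cases "finite J")
  case False
  have "fst ` Sigma J B = J" using ne by force
  then have "infinite (Sigma J B)" using False by (metis finite_imageI)
  then show ?thesis using False unfolding ecard_def esum_def by simp
next
  case fin: True
  show ?thesis
  proof (cases "\<forall>j\<in>J. finite (B j)")
    case True
    then have "finite (Sigma J B)" "card (Sigma J B) = (\<Sum>j\<in>J. card (B j))"
      using fin by auto
    then show ?thesis using fin True unfolding ecard_def esum_def
      by (simp add: of_nat_eq_enat[symmetric])
  next
    case False
    then obtain j where j: "j \<in> J" "infinite (B j)" by blast
    have "snd ` ({j} \<times> B j) = B j" by force
    moreover have "{j} \<times> B j \<subseteq> Sigma J B" using j by auto
    ultimately have "infinite (Sigma J B)" using j
      by (metis finite_imageI finite_subset)
    moreover have "(\<Sum>j\<in>J. ecard (B j)) = \<infinity>"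
      using sum.remove[OF fin j(1), of "\<lambda>j. ecard (B j)"] j unfolding ecard_def by simp
    ultimately show ?thesis using fin unfolding ecard_def esum_def by simp
  qed
qed



locale ctx = H: group H + K: group K
  for H :: "('h, 'm) monoid_scheme" and K :: "('k, 'n) monoid_scheme" +
  fixes alpha :: "'h \<Rightarrow> 'h" and beta :: "'k \<Rightarrow> 'h" and delta :: "'k \<Rightarrow> 'k"
    and J :: "'j set" and kr :: "'j \<Rightarrow> 'k"
  assumes ha: "alpha \<in> hom H H" and hb: "beta \<in> hom K H" and hd: "delta \<in> hom K K"
    and comm: "\<forall>h \<in> carrier H. \<forall>k \<in> carrier K.
           alpha h \<otimes>\<^bsub>H\<^esub> beta k = beta k \<otimes>\<^bsub>H\<^esub> alpha h"
    and krJ: "kr ` J \<subseteq> carrier K"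
    and rep: "\<forall>k \<in> carrier K. \<exists>j \<in> J. twisted_conj K delta k (kr j)"
    and uniq: "\<forall>i \<in> J. \<forall>j \<in> J. twisted_conj K delta (kr i) (kr j) \<longrightarrow> i = j"
begin

sublocale A: group_hom H H alpha using gh[OF H.group_axioms ha] .
sublocale D: group_hom K K delta using gh[OF K.group_axioms hd] .
sublocale B: group_hom K H beta
  by (simp add: group_hom_axioms_def group_hom_def hb H.group_axioms K.group_axioms)

abbreviation "G \<equiv> H \<times>\<times> K"
definition "phi = (\<lambda>(h, k). (alpha h \<otimes>\<^bsub>H\<^esub> beta k, delta k))"

lemma grpG: "group G" by (simp add: DirProd_group H.group_axioms K.group_axioms)

lemma phi_hom: "phi \<in> hom G G"
proof (rule homI)
  fix x assume "x \<in> carrier G" then show "phi x \<in> carrier G"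
    by (auto simp: phi_def)
next
  fix x y assume x: "x \<in> carrier G" and y: "y \<in> carrier G"
  obtain h1 k1 h2 k2 where e: "x = (h1,k1)" "y = (h2,k2)" by fastforce
  have c: "alpha h2 \<otimes>\<^bsub>H\<^esub> beta k1 = beta k1 \<otimes>\<^bsub>H\<^esub> alpha h2" using comm x y e by auto
  have "alpha h1 \<otimes>\<^bsub>H\<^esub> alpha h2 \<otimes>\<^bsub>H\<^esub> (beta k1 \<otimes>\<^bsub>H\<^esub> beta k2)
      = alpha h1 \<otimes>\<^bsub>H\<^esub> (alpha h2 \<otimes>\<^bsub>H\<^esub> beta k1) \<otimes>\<^bsub>H\<^esub> beta k2"
    using x y e by (simp add: H.m_assoc)
  also have "\<dots> = alpha h1 \<otimes>\<^bsub>H\<^esub> beta k1 \<otimes>\<^bsub>H\<^esub> (alpha h2 \<otimes>\<^bsub>H\<^esub> beta k2)"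
    using x y e c by (simp add: H.m_assoc)
  finally show "phi (x \<otimes>\<^bsub>G\<^esub> y) = phi x \<otimes>\<^bsub>G\<^esub> phi y"
    using x y e by (simp add: phi_def)
qed

definition "S j = twisted_stab K delta (kr j)"
definition "orb j a = (\<lambda>y. twisted_class H alpha (a \<otimes>\<^bsub>H\<^esub> beta y)) ` S j"

lemma krK: "j \<in> J \<Longrightarrow> kr j \<in> carrier K" using krJ by auto

lemma S_sub: "S j \<subseteq> carrier K" unfolding S_def twisted_stab_def by auto

lemma S_one: "j \<in> J \<Longrightarrow> \<one>\<^bsub>K\<^esub> \<in> S j"
  unfolding S_def twisted_stab_def using krK by auto

lemma S_mult: assumes "j \<in> J" "y \<in> S j" "z \<in> S j" shows "y \<otimes>\<^bsub>K\<^esub> z \<in> S j"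
proof -
  have y: "y \<in> carrier K" "kr j = y \<otimes>\<^bsub>K\<^esub> kr j \<otimes>\<^bsub>K\<^esub> inv\<^bsub>K\<^esub> (delta y)"
    and z: "z \<in> carrier K" "kr j = z \<otimes>\<^bsub>K\<^esub> kr j \<otimes>\<^bsub>K\<^esub> inv\<^bsub>K\<^esub> (delta z)"
    using assms unfolding S_def twisted_stab_def by auto
  have k: "kr j \<in> carrier K" using krK assms by auto
  have "y \<otimes>\<^bsub>K\<^esub> z \<otimes>\<^bsub>K\<^esub> kr j \<otimes>\<^bsub>K\<^esub> inv\<^bsub>K\<^esub> (delta (y \<otimes>\<^bsub>K\<^esub> z))
     = y \<otimes>\<^bsub>K\<^esub> (z \<otimes>\<^bsub>K\<^esub> kr j \<otimes>\<^bsub>K\<^esub> inv\<^bsub>K\<^esub> (delta z)) \<otimes>\<^bsub>K\<^esub> inv\<^bsub>K\<^esub> (delta y)"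
    using y(1) z(1) k by (simp add: K.m_assoc K.inv_mult_group)
  also have "\<dots> = y \<otimes>\<^bsub>K\<^esub> kr j \<otimes>\<^bsub>K\<^esub> inv\<^bsub>K\<^esub> (delta y)"
    by (simp only: z(2)[symmetric])
  also have "\<dots> = kr j" by (rule y(2)[symmetric])
  finally show ?thesis using y z unfolding S_def twisted_stab_def by auto
qed

lemma S_inv: assumes "j \<in> J" "y \<in> S j" shows "inv\<^bsub>K\<^esub> y \<in> S j"
proof -
  have y: "y \<in> carrier K" "kr j = y \<otimes>\<^bsub>K\<^esub> kr j \<otimes>\<^bsub>K\<^esub> inv\<^bsub>K\<^esub> (delta y)"
    using assms unfolding S_def twisted_stab_def by auto
  have k: "kr j \<in> carrier K" using krK assms by auto
  have "inv\<^bsub>K\<^esub> y \<otimes>\<^bsub>K\<^esub> kr j \<otimes>\<^bsub>K\<^esub> inv\<^bsub>K\<^esub> (delta (inv\<^bsub>K\<^esub> y))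
     = inv\<^bsub>K\<^esub> y \<otimes>\<^bsub>K\<^esub> kr j \<otimes>\<^bsub>K\<^esub> delta y"
    using y(1) k by simp
  also have "\<dots> = inv\<^bsub>K\<^esub> y \<otimes>\<^bsub>K\<^esub> (y \<otimes>\<^bsub>K\<^esub> kr j \<otimes>\<^bsub>K\<^esub> inv\<^bsub>K\<^esub> (delta y)) \<otimes>\<^bsub>K\<^esub> delta y"
    by (rule arg_cong[where f = "\<lambda>t. inv\<^bsub>K\<^esub> y \<otimes>\<^bsub>K\<^esub> t \<otimes>\<^bsub>K\<^esub> delta y", OF y(2)])
  also have "\<dots> = kr j" using y(1) k by (simp add: K.m_assoc flip: K.m_assoc[of "inv\<^bsub>K\<^esub> y" y])
  finally show ?thesis using y unfolding S_def twisted_stab_def by auto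
qed

lemma compat:
  assumes "x \<in> carrier H" "x' \<in> carrier H" "y \<in> carrier K" "twisted_conj H alpha x x'"
  shows "twisted_conj H alpha (x \<otimes>\<^bsub>H\<^esub> beta y) (x' \<otimes>\<^bsub>H\<^esub> beta y)"
proof -
  obtain g where g: "g \<in> carrier H" "x = g \<otimes>\<^bsub>H\<^esub> x' \<otimes>\<^bsub>H\<^esub> inv\<^bsub>H\<^esub> (alpha g)"
    using assms unfolding twisted_conj_def by blast
  have c: "alpha (inv\<^bsub>H\<^esub> g) \<otimes>\<^bsub>H\<^esub> beta y = beta y \<otimes>\<^bsub>H\<^esub> alpha (inv\<^bsub>H\<^esub> g)"
    using comm H.inv_closed[OF g(1)] assms(3) by blast
  then have c: "inv\<^bsub>H\<^esub> (alpha g) \<otimes>\<^bsub>H\<^esub> beta y = beta y \<otimes>\<^bsub>H\<^esub> inv\<^bsub>H\<^esub> (alpha g)"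
    using g by simp
  have "x \<otimes>\<^bsub>H\<^esub> beta y = g \<otimes>\<^bsub>H\<^esub> x' \<otimes>\<^bsub>H\<^esub> (inv\<^bsub>H\<^esub> (alpha g) \<otimes>\<^bsub>H\<^esub> beta y)"
    using g assms by (simp add: H.m_assoc)
  also have "\<dots> = g \<otimes>\<^bsub>H\<^esub> (x' \<otimes>\<^bsub>H\<^esub> beta y) \<otimes>\<^bsub>H\<^esub> inv\<^bsub>H\<^esub> (alpha g)"
    unfolding c using g assms by (simp add: H.m_assoc)
  finally show ?thesis unfolding twisted_conj_def using g by blast
qed

lemma orb_sub:
  assumes j: "j \<in> J" and a: "a \<in> carrier H" and b: "b \<in> carrier H" and y0: "y0 \<in> S j"
    and c: "twisted_conj H alpha a (b \<otimes>\<^bsub>H\<^esub> beta y0)"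
  shows "orb j a \<subseteq> orb j b"
proof
  fix C assume "C \<in> orb j a"
  then obtain y where y: "y \<in> S j" "C = twisted_class H alpha (a \<otimes>\<^bsub>H\<^esub> beta y)"
    unfolding orb_def by blast
  have yK: "y \<in> carrier K" "y0 \<in> carrier K" using y y0 S_sub by auto
  have "twisted_conj H alpha (a \<otimes>\<^bsub>H\<^esub> beta y) (b \<otimes>\<^bsub>H\<^esub> beta y0 \<otimes>\<^bsub>H\<^esub> beta y)"
    using compat[OF a _ yK(1) c] b yK by simp
  then have "C = twisted_class H alpha (b \<otimes>\<^bsub>H\<^esub> beta y0 \<otimes>\<^bsub>H\<^esub> beta y)"
    using y tc_class_eq[OF H.group_axioms ha] a b yK by simp
  also have "\<dots> = twisted_class H alpha (b \<otimes>\<^bsub>H\<^esub> beta (y0 \<otimes>\<^bsub>K\<^esub> y))"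
    using b yK by (simp add: H.m_assoc)
  finally show "C \<in> orb j b" unfolding orb_def using S_mult[OF j y0 y(1)] by blast
qed

lemma orb_eq_iff:
  assumes j: "j \<in> J" and a: "a \<in> carrier H" and b: "b \<in> carrier H"
  shows "orb j a = orb j b \<longleftrightarrow> (\<exists>y\<in>S j. twisted_conj H alpha a (b \<otimes>\<^bsub>H\<^esub> beta y))"
proof
  assume e: "orb j a = orb j b"
  have "twisted_class H alpha (a \<otimes>\<^bsub>H\<^esub> beta \<one>\<^bsub>K\<^esub>) \<in> orb j a"
    unfolding orb_def using S_one[OF j] by blast
  then have "twisted_class H alpha a \<in> orb j b" using e a by simp
  then obtain y where y: "y \<in> S j" "twisted_class H alpha a = twisted_class H alpha (b \<otimes>\<^bsub>H\<^esub> beta y)"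
    unfolding orb_def by blast
  then have "twisted_conj H alpha a (b \<otimes>\<^bsub>H\<^esub> beta y)"
    using tc_class_eq[OF H.group_axioms ha, of a "b \<otimes>\<^bsub>H\<^esub> beta y"] a b S_sub
    by (meson H.m_closed B.hom_closed subsetD)
  then show "\<exists>y\<in>S j. twisted_conj H alpha a (b \<otimes>\<^bsub>H\<^esub> beta y)" using y by blast
next
  assume "\<exists>y\<in>S j. twisted_conj H alpha a (b \<otimes>\<^bsub>H\<^esub> beta y)"
  then obtain y0 where y0: "y0 \<in> S j" "twisted_conj H alpha a (b \<otimes>\<^bsub>H\<^esub> beta y0)" by blast
  have yK: "y0 \<in> carrier K" using y0 S_sub by auto
  have 1: "orb j a \<subseteq> orb j b" by (rule orb_sub[OF j a b y0])
  have "twisted_conj H alpha (a \<otimes>\<^bsub>H\<^esub> beta (inv\<^bsub>K\<^esub> y0))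
        (b \<otimes>\<^bsub>H\<^esub> beta y0 \<otimes>\<^bsub>H\<^esub> beta (inv\<^bsub>K\<^esub> y0))"
    using compat[OF a H.m_closed[OF b B.hom_closed[OF yK]] K.inv_closed[OF yK] y0(2)] .
  also have "b \<otimes>\<^bsub>H\<^esub> beta y0 \<otimes>\<^bsub>H\<^esub> beta (inv\<^bsub>K\<^esub> y0) = b"
    using b yK by (simp add: H.m_assoc)
  finally have "twisted_conj H alpha b (a \<otimes>\<^bsub>H\<^esub> beta (inv\<^bsub>K\<^esub> y0))"
    using tc_sym[OF H.group_axioms ha] a b yK by simp
  then have 2: "orb j b \<subseteq> orb j a" by (rule orb_sub[OF j b a S_inv[OF j y0(1)]])
  show "orb j a = orb j b" using 1 2 by blast
qed

lemma key:
  assumes a: "a \<in> carrier H" and b: "b \<in> carrier H" and i: "i \<in> J" and j: "j \<in> J"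
  shows "twisted_conj G phi (a, kr i) (b, kr j) \<longleftrightarrow> i = j \<and> orb j a = orb j b"
proof
  assume "twisted_conj G phi (a, kr i) (b, kr j)"
  then obtain g y where gy: "g \<in> carrier H" "y \<in> carrier K"
    "(a, kr i) = (g, y) \<otimes>\<^bsub>G\<^esub> (b, kr j) \<otimes>\<^bsub>G\<^esub> inv\<^bsub>G\<^esub> (phi (g, y))"
    unfolding twisted_conj_def by auto
  have e: "a = g \<otimes>\<^bsub>H\<^esub> b \<otimes>\<^bsub>H\<^esub> inv\<^bsub>H\<^esub> (alpha g \<otimes>\<^bsub>H\<^esub> beta y)"
     "kr i = y \<otimes>\<^bsub>K\<^esub> kr j \<otimes>\<^bsub>K\<^esub> inv\<^bsub>K\<^esub> (delta y)"
    using gy(3) gy(1,2) by (simp_all add: phi_def H.group_axioms K.group_axioms)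
  have "twisted_conj K delta (kr i) (kr j)" unfolding twisted_conj_def using e(2) gy(2) by blast
  then have ij: "i = j" using uniq i j by blast
  have yS: "y \<in> S j" using e(2) gy(2) ij unfolding S_def twisted_stab_def by simp
  have "a = g \<otimes>\<^bsub>H\<^esub> (b \<otimes>\<^bsub>H\<^esub> beta (inv\<^bsub>K\<^esub> y)) \<otimes>\<^bsub>H\<^esub> inv\<^bsub>H\<^esub> (alpha g)"
    using e(1) gy b by (simp add: H.m_assoc H.inv_mult_group)
  then have "twisted_conj H alpha a (b \<otimes>\<^bsub>H\<^esub> beta (inv\<^bsub>K\<^esub> y))"
    unfolding twisted_conj_def using gy by blast
  then have "orb j a = orb j b" using orb_eq_iff[OF j a b] S_inv[OF j yS] by blast
  then show "i = j \<and> orb j a = orb j b" using ij by blast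
next
  assume "i = j \<and> orb j a = orb j b"
  then have ij: "i = j" and "orb j a = orb j b" by auto
  then obtain y where y: "y \<in> S j" "twisted_conj H alpha a (b \<otimes>\<^bsub>H\<^esub> beta y)"
    using orb_eq_iff[OF j a b] by blast
  then obtain g where g: "g \<in> carrier H"
    "a = g \<otimes>\<^bsub>H\<^esub> (b \<otimes>\<^bsub>H\<^esub> beta y) \<otimes>\<^bsub>H\<^esub> inv\<^bsub>H\<^esub> (alpha g)"
    unfolding twisted_conj_def by blast
  have yK: "y \<in> carrier K" using y S_sub by auto
  have yi: "inv\<^bsub>K\<^esub> y \<in> S j" using S_inv[OF j y(1)] .
  then have e2: "kr j = inv\<^bsub>K\<^esub> y \<otimes>\<^bsub>K\<^esub> kr j \<otimes>\<^bsub>K\<^esub> inv\<^bsub>K\<^esub> (delta (inv\<^bsub>K\<^esub> y))"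
    unfolding S_def twisted_stab_def by blast
  have e1: "a = g \<otimes>\<^bsub>H\<^esub> b \<otimes>\<^bsub>H\<^esub> inv\<^bsub>H\<^esub> (alpha g \<otimes>\<^bsub>H\<^esub> beta (inv\<^bsub>K\<^esub> y))"
    using g yK b by (simp add: H.m_assoc H.inv_mult_group)
  have "(a, kr j) = (g, inv\<^bsub>K\<^esub> y) \<otimes>\<^bsub>G\<^esub> (b, kr j) \<otimes>\<^bsub>G\<^esub> inv\<^bsub>G\<^esub> (phi (g, inv\<^bsub>K\<^esub> y))"
    using g(1) yK b krK[OF j] by (simp add: phi_def H.group_axioms K.group_axioms e1[symmetric] e2[symmetric]
       del: B.hom_inv D.hom_inv)
  then show "twisted_conj G phi (a, kr i) (b, kr j)"
    unfolding twisted_conj_def ij using g(1) yK by (intro bexI[of _ "(g, inv\<^bsub>K\<^esub> y)"]) auto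
qed

end



context ctx begin

definition "jj k = (SOME j. j \<in> J \<and> twisted_conj K delta k (kr j))"
definition "cc k = (SOME g. g \<in> carrier K \<and> k = g \<otimes>\<^bsub>K\<^esub> kr (jj k) \<otimes>\<^bsub>K\<^esub> inv\<^bsub>K\<^esub> (delta g))"
definition "F x = (jj (snd x), orb (jj (snd x)) (fst x \<otimes>\<^bsub>H\<^esub> beta (cc (snd x))))"

lemma jj: assumes "k \<in> carrier K" shows "jj k \<in> J" "twisted_conj K delta k (kr (jj k))"
proof -
  have "\<exists>j. j \<in> J \<and> twisted_conj K delta k (kr j)" using rep assms by blast
  then have "jj k \<in> J \<and> twisted_conj K delta k (kr (jj k))" unfolding jj_def by (rule someI_ex)
  then show "jj k \<in> J" "twisted_conj K delta k (kr (jj k))" by auto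
qed

lemma cc: assumes "k \<in> carrier K"
  shows "cc k \<in> carrier K" "k = cc k \<otimes>\<^bsub>K\<^esub> kr (jj k) \<otimes>\<^bsub>K\<^esub> inv\<^bsub>K\<^esub> (delta (cc k))"
proof -
  have "\<exists>g. g \<in> carrier K \<and> k = g \<otimes>\<^bsub>K\<^esub> kr (jj k) \<otimes>\<^bsub>K\<^esub> inv\<^bsub>K\<^esub> (delta g)"
    using jj(2)[OF assms] unfolding twisted_conj_def by blast
  then have "cc k \<in> carrier K \<and> k = cc k \<otimes>\<^bsub>K\<^esub> kr (jj k) \<otimes>\<^bsub>K\<^esub> inv\<^bsub>K\<^esub> (delta (cc k))"
    unfolding cc_def by (rule someI_ex)
  then show "cc k \<in> carrier K" "k = cc k \<otimes>\<^bsub>K\<^esub> kr (jj k) \<otimes>\<^bsub>K\<^esub> inv\<^bsub>K\<^esub> (delta (cc k))" by blast+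
qed

lemma jj_kr: "j \<in> J \<Longrightarrow> jj (kr j) = j"
proof -
  assume j: "j \<in> J"
  have "twisted_conj K delta (kr j) (kr (jj (kr j)))" "jj (kr j) \<in> J" using jj krK[OF j] by auto
  then show ?thesis using uniq j by metis
qed

lemma red: assumes h: "h \<in> carrier H" and k: "k \<in> carrier K"
  shows "twisted_conj G phi (h, k) (h \<otimes>\<^bsub>H\<^esub> beta (cc k), kr (jj k))"
proof -
  note c = cc[OF k]
  have kj: "kr (jj k) \<in> carrier K" using krK jj(1)[OF k] .
  have e1: "h = \<one>\<^bsub>H\<^esub> \<otimes>\<^bsub>H\<^esub> (h \<otimes>\<^bsub>H\<^esub> beta (cc k)) \<otimes>\<^bsub>H\<^esub> inv\<^bsub>H\<^esub> (alpha \<one>\<^bsub>H\<^esub> \<otimes>\<^bsub>H\<^esub> beta (cc k))"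
    using h c(1) by (simp add: H.m_assoc)
  have "(h, k) = (\<one>\<^bsub>H\<^esub>, cc k) \<otimes>\<^bsub>G\<^esub> (h \<otimes>\<^bsub>H\<^esub> beta (cc k), kr (jj k)) \<otimes>\<^bsub>G\<^esub> inv\<^bsub>G\<^esub> (phi (\<one>\<^bsub>H\<^esub>, cc k))"
    unfolding phi_def split
    apply (simp only: inv_DirProd[OF H.group_axioms K.group_axioms
       H.m_closed[OF A.hom_closed[OF H.one_closed] B.hom_closed[OF c(1)]] D.hom_closed[OF c(1)]]
       mult_DirProd prod.inject)
    using e1 c(2) by blast
  then show ?thesis unfolding twisted_conj_def using c(1) by (intro bexI[of _ "(\<one>\<^bsub>H\<^esub>, cc k)"]) auto
qed

lemma kernel: assumes x: "x \<in> carrier G" and x': "x' \<in> carrier G"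
  shows "F x = F x' \<longleftrightarrow> twisted_class G phi x = twisted_class G phi x'"
proof -
  obtain h k h' k' where e: "x = (h, k)" "x' = (h', k')" by fastforce
  have m: "h \<in> carrier H" "k \<in> carrier K" "h' \<in> carrier H" "k' \<in> carrier K" using x x' e by auto
  let ?a = "h \<otimes>\<^bsub>H\<^esub> beta (cc k)" and ?b = "h' \<otimes>\<^bsub>H\<^esub> beta (cc k')"
  have ab: "?a \<in> carrier H" "?b \<in> carrier H" using m cc(1) by auto
  have kj: "kr (jj k) \<in> carrier K" "kr (jj k') \<in> carrier K" using krK jj(1) m by auto
  note eqv = tc_class_eq[OF grpG phi_hom] tc_sym[OF grpG phi_hom] tc_trans[OF grpG phi_hom]
  have r1: "twisted_conj G phi (h, k) (?a, kr (jj k))" using red m(1,2) .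
  have r2: "twisted_conj G phi (h', k') (?b, kr (jj k'))" using red m(3,4) .
  have M: "(h, k) \<in> carrier G" "(h', k') \<in> carrier G" "(?a, kr (jj k)) \<in> carrier G"
    "(?b, kr (jj k')) \<in> carrier G" using m ab kj by auto
  note T = tc_trans[OF grpG phi_hom] and Sy = tc_sym[OF grpG phi_hom]
  have "twisted_class G phi x = twisted_class G phi x' \<longleftrightarrow> twisted_conj G phi (h, k) (h', k')"
    using tc_class_eq[OF grpG phi_hom M(1,2)] e by simp
  also have "\<dots> \<longleftrightarrow> twisted_conj G phi (?a, kr (jj k)) (?b, kr (jj k'))"
  proof
    assume c: "twisted_conj G phi (h, k) (h', k')"
    have "twisted_conj G phi (h, k) (?b, kr (jj k'))" by (rule T[OF M(1,2,4) c r2])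
    then show "twisted_conj G phi (?a, kr (jj k)) (?b, kr (jj k'))"
      by (rule T[OF M(3,1,4) Sy[OF M(1,3) r1]])
  next
    assume c: "twisted_conj G phi (?a, kr (jj k)) (?b, kr (jj k'))"
    have "twisted_conj G phi (h, k) (?b, kr (jj k'))" by (rule T[OF M(1,3,4) r1 c])
    then show "twisted_conj G phi (h, k) (h', k')"
      by (rule T[OF M(1,4,2) _ Sy[OF M(2,4) r2]])
  qed
  also have "\<dots> \<longleftrightarrow> F x = F x'"
  proof -
    have f: "F x = F x' \<longleftrightarrow> jj k = jj k' \<and> orb (jj k) ?a = orb (jj k') ?b"
      using e unfolding F_def by simp
    show ?thesis unfolding f key[OF ab jj(1)[OF m(2)] jj(1)[OF m(4)]]
      by (cases "jj k = jj k'") simp_all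
  qed
  finally show ?thesis by simp
qed

lemma image_F: "F ` carrier G = Sigma J (\<lambda>j. orb j ` carrier H)"
proof
  show "F ` carrier G \<subseteq> Sigma J (\<lambda>j. orb j ` carrier H)"
    unfolding F_def using jj(1) cc(1) by auto
next
  show "Sigma J (\<lambda>j. orb j ` carrier H) \<subseteq> F ` carrier G"
  proof
    fix p assume "p \<in> Sigma J (\<lambda>j. orb j ` carrier H)"
    then obtain j h where p: "j \<in> J" "h \<in> carrier H" "p = (j, orb j h)" by blast
    have k: "kr j \<in> carrier K" using krK p by auto
    have c: "cc (kr j) \<in> carrier K" using cc k by auto
    let ?x = "(h \<otimes>\<^bsub>H\<^esub> inv\<^bsub>H\<^esub> beta (cc (kr j)), kr j)"
    have "F ?x = p" unfolding F_def using p jj_kr c by (simp add: H.m_assoc)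
    moreover have "?x \<in> carrier G" using p k c by auto
    ultimately show "p \<in> F ` carrier G" by blast
  qed
qed

lemma main: "reidemeister G phi = esum J (\<lambda>j. ecard (action_orbits H alpha beta (twisted_stab K delta (kr j))))"
proof -
  have "reidemeister G phi = ecard (F ` carrier G)"
    unfolding reidemeister_def twisted_classes_def
    by (rule ecard_kernel[symmetric]) (use kernel in blast)
  also have "\<dots> = esum J (\<lambda>j. ecard (orb j ` carrier H))"
    unfolding image_F by (rule ecard_Sigma) auto
  finally show ?thesis unfolding action_orbits_def orb_def S_def .
qed

end


theorem mainTheorem9:
  fixes H :: "('h, 'm) monoid_scheme" and K :: "('k, 'n) monoid_scheme"
    and alpha :: "'h \<Rightarrow> 'h" and beta :: "'k \<Rightarrow> 'h" and delta :: "'k \<Rightarrow> 'k"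
    and J :: "'j set" and kr :: "'j \<Rightarrow> 'k"
  assumes "group H" and "group K"
    and "alpha \<in> hom H H" and "beta \<in> hom K H" and "delta \<in> hom K K"
    and "\<forall>h \<in> carrier H. \<forall>k \<in> carrier K.
           alpha h \<otimes>\<^bsub>H\<^esub> beta k = beta k \<otimes>\<^bsub>H\<^esub> alpha h"
    and "kr ` J \<subseteq> carrier K"
    and "\<forall>k \<in> carrier K. \<exists>j \<in> J. twisted_conj K delta k (kr j)"
    and "\<forall>i \<in> J. \<forall>j \<in> J. twisted_conj K delta (kr i) (kr j) \<longrightarrow> i = j"
  shows "reidemeister (H \<times>\<times> K) (\<lambda>(h, k). (alpha h \<otimes>\<^bsub>H\<^esub> beta k, delta k))
         = esum J (\<lambda>j. ecard (action_orbits H alpha beta (twisted_stab K delta (kr j))))"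
proof -
  interpret ctx H K alpha beta delta J kr
    using assms by (simp add: ctx_def ctx_axioms_def)
  show ?thesis using main unfolding phi_def .
qed

end
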